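(* Let $X$ be a correlator of type $X_{-1}$ and let $W_1=x_1^{a_1}x_2+\dots+x_{N-1}^{a_{N-1}}x_N+x_N^{a_N}x_1$ be a loop summand with $K_{W_1}=1$. Then, after cyclically renumbering the variables of $W_1$, the sequence $(K_1,\dots,K_N)$ is a concatenation of blocks $(0)$ and $(-1,1)$ followed by exactly one of the blocks $(1)$, $(-1,2)$, $(-2,3)$. The block $(-2,3)$ can occur only if $a_{N-1}=2$, and in the cases $(-1,2)$ and $(-2,3)$ one has $\ell_{N-1}+\ell_N\le1$.
   Context: $W=\bigoplus_jW_j$ is an invertible polynomial written as a disjoint sum of atomic summands, $E_W$ its exponent matrix, $K_{W_1}=\sum_{i\in W_1}K_i$, loop indices taken mod $N$. A genus-zero correlator (B-model of $W^T$, or A-model of $(W,G_W)$ via Krawitz's map) is of type $X_{-1}$ if it has at least four insertions, has the form $\langle x_N,\dots,x_N,\dots,x_1,\dots,x_1,\alpha,\beta\rangle$ with $x_i$ appearing $\ell_i\ge0$ times and $\alpha=\prod x_i^{m_i}$, $\beta=\prod x_i^{n_i}$ monomials of the standard basis of $\mathrm{Jac}(W^T)$ (for a loop summand: exponents $0\le m_i,n_i\le a_i-1$), and, with $b=E_W^{-1}(\ell+m+n+2\cdot\mathbf 1)$ and $K_i=\ell_i-b_i+1$, satisfies $K_i\in\mathbb Z$ and $\sum_iK_i=1$. *)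

theory Defs
  imports Complex_Main
begin

end

theory Submission
  imports Defs
begin

lemma arith1:
  fixes A L L' mm nn G G' :: int
  assumes e: "A * (L + 1 - G) + (L' + 1 - G') = L + mm + nn + 2"
    and A2: "A \<ge> 2" and L0: "L \<ge> 0" and L'0: "L' \<ge> 0" and m0: "mm \<ge> 0" and n0: "nn \<ge> 0"
    and mA: "mm \<le> A - 1" and nA: "nn \<le> A - 1"
  shows "(G < 0 \<longrightarrow> G' \<ge> -2*G - 1) \<and> (G = -2 \<and> G' = 3 \<longrightarrow> A = 2 \<and> L + L' \<le> 1)
     \<and> (G = -1 \<and> G' = 2 \<longrightarrow> L + L' \<le> 1)"
proof -
  have e2: "G' = (A - 1) * L + L' + A - 1 - mm - nn - A * G" using e by (simp add: algebra_simps)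
  have p1: "(A - 1) * L \<ge> L" proof -
    have "(A - 2) * L \<ge> 0" using A2 L0 by simp
    then show ?thesis by (simp add: algebra_simps)
  qed
  have "G < 0 \<longrightarrow> G' \<ge> -2*G - 1"
  proof
    assume "G < 0"
    then have "A * (-G - 1) \<ge> 2 * (-G - 1)" using A2 by (intro mult_right_mono) auto
    then show "G' \<ge> -2*G - 1" using e2 p1 L0 L'0 mA nA by (simp add: algebra_simps)
  qed
  moreover have "G = -2 \<and> G' = 3 \<longrightarrow> A = 2 \<and> L + L' \<le> 1"
    using e2 p1 L0 L'0 mA nA A2 by auto
  moreover have "G = -1 \<and> G' = 2 \<longrightarrow> L + L' \<le> 1"
    using e2 p1 L0 L'0 mA nA A2 by auto
  ultimately show ?thesis by blast
qed

inductive blocks :: "int list \<Rightarrow> bool" where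
  "blocks []" | "blocks xs \<Longrightarrow> blocks (0 # xs)" | "blocks xs \<Longrightarrow> blocks (-1 # 1 # xs)"

lemma blocks_concat: "blocks xs \<Longrightarrow> \<exists>bs. set bs \<subseteq> {[0::rat],[-1,1]} \<and> map of_int xs = concat bs"
proof (induction rule: blocks.induct)
  case 1 then show ?case by (intro exI[of _ "[]"]) simp
next
  case (2 xs) then obtain bs where "set bs \<subseteq> {[0::rat],[-1,1]} \<and> map of_int xs = concat bs" by blast
  then show ?case by (intro exI[of _ "[0] # bs"]) simp
next
  case (3 xs) then obtain bs where "set bs \<subseteq> {[0::rat],[-1,1]} \<and> map of_int xs = concat bs" by blast
  then show ?case by (intro exI[of _ "[-1,1] # bs"]) simp
qed

lemma blocks_scan:
  fixes h :: "nat \<Rightarrow> int"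
  assumes A: "\<forall>i<M. (i = 0 \<or> h (i - 1) \<ge> 0) \<longrightarrow> h i \<le> 0"
    and B: "\<forall>i<M. h i < 0 \<longrightarrow> Suc i < M \<and> h i = -1 \<and> h (Suc i) = 1"
  shows "q \<le> M \<Longrightarrow> (q = 0 \<or> h (q - 1) \<ge> 0) \<Longrightarrow> blocks (map h [q..<M])"
proof (induction "M - q" arbitrary: q rule: less_induct)
  case less
  show ?case
  proof (cases "q = M")
    case True then show ?thesis by (simp add: blocks.intros)
  next
    case False
    then have qM: "q < M" using less.prems by simp
    have hq: "h q \<le> 0" using A qM less.prems(2) by blast
    show ?thesis
    proof (cases "h q = 0")
      case True
      have "blocks (map h [Suc q..<M])" using less.hyps[of "Suc q"] qM True by simp
      then show ?thesis using qM True by (simp add: upt_conv_Cons blocks.intros)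
    next
      case False
      then have "Suc q < M \<and> h q = -1 \<and> h (Suc q) = 1" using B qM hq by simp
      moreover have "M - Suc (Suc q) < M - q" using calculation by (elim conjE) linarith
      moreover have "blocks (map h [Suc (Suc q)..<M])" using less.hyps[of "Suc (Suc q)"] calculation by simp
      ultimately show ?thesis using qM by (simp add: upt_conv_Cons blocks.intros)
    qed
  qed
qed

lemma sum_one_nonneg:
  fixes f :: "nat \<Rightarrow> int"
  assumes fin: "finite S" and nn: "\<forall>i\<in>S. f i \<ge> 0" and s: "sum f S = 1"
  shows "\<exists>j\<in>S. f j = 1 \<and> (\<forall>i\<in>S. i \<noteq> j \<longrightarrow> f i = 0)"
proof -
  obtain j where j: "j \<in> S" "f j > 0"
  proof (rule ccontr)
    assume "\<not> thesis"
    then have "\<forall>i\<in>S. f i \<le> 0" using that by force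
    then have "sum f S \<le> 0" by (simp add: sum_nonpos)
    then show False using s by simp
  qed
  have split: "sum f S = f j + sum f (S - {j})" using fin j(1) by (simp add: sum.remove)
  have r0: "sum f (S - {j}) \<ge> 0" using nn by (intro sum_nonneg) auto
  have fj: "f j = 1" using split r0 s j(2) by simp
  have "\<forall>i\<in>S. i \<noteq> j \<longrightarrow> f i = 0"
  proof (intro ballI impI)
    fix i assume "i \<in> S" "i \<noteq> j"
    then have "f i \<le> sum f (S - {j})" using fin nn by (intro member_le_sum) auto
    then show "f i = 0" using split s fj nn \<open>i \<in> S\<close> by force
  qed
  then show ?thesis using j fj by blast
qed

lemma sum_shift_periodic:
  fixes f :: "nat \<Rightarrow> int"
  assumes "N > 0" and "f N = f 0"
  shows "(\<Sum>i<N. f (Suc i)) = (\<Sum>i<N. f i)"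
proof -
  obtain n where n: "N = Suc n" using assms(1) by (cases N) auto
  have "(\<Sum>i<Suc n. f i) = f 0 + (\<Sum>i<n. f (Suc i))" by (rule sum.lessThan_Suc_shift)
  moreover have "(\<Sum>i<Suc n. f (Suc i)) = (\<Sum>i<n. f (Suc i)) + f (Suc n)" by simp
  ultimately show ?thesis using assms n by simp
qed

lemma comb:
  fixes g :: "nat \<Rightarrow> int" and N :: nat
  assumes N2: "N \<ge> 2" and per: "\<forall>i. g (i + N) = g i"
    and ineq: "\<forall>i. g i < 0 \<longrightarrow> g (Suc i) \<ge> -2 * g i - 1"
    and sm: "(\<Sum>i<N. g i) = 1"
  shows "\<exists>j<N. \<exists>bs fin. set bs \<subseteq> {[0::rat],[-1,1]} \<and> fin \<in> {[1],[-1,2],[-2,3]} \<and>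
     map (\<lambda>i. of_int (g (i + j + 2))) [0..<N] = concat bs @ fin \<and>
     (fin \<noteq> [1] \<longrightarrow> fin = [of_int (g j), of_int (g (Suc j))])"
proof -
  define t where "t i = max (g (Suc i)) 0 + min (g i) 0" for i
  have tnn: "t i \<ge> 0" for i
  proof (cases "g i < 0")
    case True then show ?thesis using ineq unfolding t_def by force
  next
    case False then show ?thesis unfolding t_def by simp
  qed
  have gper: "g (i mod N) = g i" for i
  proof (induction i rule: nat_less_induct)
    case (1 i)
    show ?case
    proof (cases "i < N")
      case True then show ?thesis by simp
    next
      case False
      then have "i = (i - N) + N" by simp
      then have "g i = g (i - N)" using per by metis
      moreover have "i mod N = (i - N) mod N" using False by (simp add: le_mod_geq)
      ultimately show ?thesis using 1 N2 False by simp
    qed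
  qed
  have tper: "t (i mod N) = t i" for i
    unfolding t_def using gper[of "Suc i"] gper[of "Suc (i mod N)"] gper[of i]
    by (simp add: mod_Suc_eq)
  have s1: "(\<Sum>i<N. max (g (Suc i)) 0) = (\<Sum>i<N. max (g i) 0)"
    using N2 per[rule_format, of 0] by (intro sum_shift_periodic[where f = "\<lambda>i. max (g i) 0"]) auto
  have "(\<Sum>i<N. t i) = (\<Sum>i<N. max (g i) 0) + (\<Sum>i<N. min (g i) 0)"
    unfolding t_def by (simp add: sum.distrib s1)
  also have "\<dots> = (\<Sum>i<N. max (g i) 0 + min (g i) 0)" by (simp add: sum.distrib)
  also have "\<dots> = (\<Sum>i<N. g i)" by (intro sum.cong) auto
  finally have tsum: "(\<Sum>i<N. t i) = 1" using sm by simp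
  obtain j where j: "j < N" "t j = 1" "\<forall>i<N. i \<noteq> j \<longrightarrow> t i = 0"
    using sum_one_nonneg[of "{..<N}" t] tsum tnn by auto
  have t0: "t (i + j + 1) = 0" if "i < N - 1" for i
  proof -
    have "(i + j + 1) mod N \<noteq> j"
    proof (cases "i + j + 1 < N")
      case True then show ?thesis by simp
    next
      case False
      then have "(i + j + 1) mod N = i + j + 1 - N" using that j(1) by (simp add: le_mod_geq)
      then show ?thesis using that j(1) False by auto
    qed
    then show ?thesis using j(3) tper[of "i + j + 1"] N2 by (metis mod_less_divisor neq0_conv not_numeral_le_zero)
  qed
  define h where "h i = g (i + j + 2)" for i
  have hN1: "h (N - 1) = g (Suc j)"
  proof -
    have "N - 1 + j + 2 = Suc j + N" using N2 by simp
    then show ?thesis unfolding h_def using per[rule_format, of "Suc j"] by (simp add: add.commute)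
  qed
  have hN2: "h (N - 2) = g j"
  proof -
    have eq: "N - 2 + j + 2 = j + N" using N2 by simp
    show ?thesis unfolding h_def by (subst eq) (rule per[rule_format])
  qed
  have gSj: "g (Suc j) \<ge> 1"
  proof (cases "g j < 0")
    case True then show ?thesis using ineq by force
  next
    case False then show ?thesis using j(2) unfolding t_def by simp
  qed
  have tA: "max (h i) 0 + min (if i = 0 then g (Suc j) else h (i - 1)) 0 = 0" if "i < N - 1" for i
    using t0[OF that] unfolding t_def h_def by (cases i) (auto simp: add.commute add.left_commute)
  have Agen: "\<forall>i<M. (i = 0 \<or> h (i - 1) \<ge> 0) \<longrightarrow> h i \<le> 0" if "M \<le> N - 1" for M
  proof (intro allI impI)
    fix i assume "i < M" "i = 0 \<or> h (i - 1) \<ge> 0"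
    then show "h i \<le> 0" using tA[of i] that gSj N2 by (cases "i = 0") auto
  qed
  have hstep: "h i = -1 \<and> h (Suc i) = 1" if "Suc i < N - 1" "h i < 0" for i
  proof -
    have "h (Suc i) \<ge> -2 * h i - 1" using ineq that(2) unfolding h_def by simp
    moreover have "max (h (Suc i)) 0 + min (h i) 0 = 0" using tA[OF that(1)] by simp
    ultimately show ?thesis using that(2) by auto
  qed
  have hpos: "h (Suc i) \<ge> 1" if "h i < 0" for i
    using ineq that unfolding h_def by force
  show ?thesis
  proof (cases "g j < 0")
    case False
    then have gS1: "g (Suc j) = 1" using j(2) unfolding t_def by simp
    have B: "\<forall>i<N-1. h i < 0 \<longrightarrow> Suc i < N - 1 \<and> h i = -1 \<and> h (Suc i) = 1"
    proof (intro allI impI)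
      fix i assume i: "i < N - 1" "h i < 0"
      have "Suc i \<noteq> N - 1"
      proof
        assume "Suc i = N - 1"
        then have "i = N - 2" by simp
        then show False using i(2) hN2 False by simp
      qed
      then show "Suc i < N - 1 \<and> h i = -1 \<and> h (Suc i) = 1" using hstep i by simp
    qed
    have "blocks (map h [0..<N-1])" using blocks_scan[OF Agen[OF order_refl] B] by simp
    then obtain bs where bs: "set bs \<subseteq> {[0::rat],[-1,1]}" "map of_int (map h [0..<N-1]) = concat bs"
      using blocks_concat by blast
    have "[0..<N] = [0..<Suc (N-1)]" using N2 by simp
    also have "\<dots> = [0..<N-1] @ [N-1]" by simp
    finally have "[0..<N] = [0..<N-1] @ [N-1]" .
    then have "map (\<lambda>i. of_int (g (i + j + 2)) :: rat) [0..<N] = concat bs @ [1]"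
      using bs(2) hN1 gS1 unfolding h_def by (simp add: comp_def)
    then show ?thesis using j(1) bs(1) by (intro exI[of _ j]) auto
  next
    case True
    have gs: "g (Suc j) + g j = 1" using j(2) gSj True unfolding t_def by simp
    have "g (Suc j) \<ge> -2 * g j - 1" using ineq True by simp
    then have gj: "g j = -1 \<or> g j = -2" using gs True by auto
    have B: "\<forall>i<N-2. h i < 0 \<longrightarrow> Suc i < N - 2 \<and> h i = -1 \<and> h (Suc i) = 1"
    proof (intro allI impI)
      fix i assume i: "i < N - 2" "h i < 0"
      have st: "h i = -1 \<and> h (Suc i) = 1" using hstep i by simp
      have "Suc i \<noteq> N - 2"
      proof
        assume "Suc i = N - 2"
        then show False using st hN2 True by simp
      qed
      then show "Suc i < N - 2 \<and> h i = -1 \<and> h (Suc i) = 1" using st i by simp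
    qed
    have "blocks (map h [0..<N-2])" using blocks_scan[OF Agen B] N2 by simp
    then obtain bs where bs: "set bs \<subseteq> {[0::rat],[-1,1]}" "map of_int (map h [0..<N-2]) = concat bs"
      using blocks_concat by blast
    have "[0..<N] = [0..<Suc (Suc (N-2))]" using N2 by (simp add: Suc_diff_Suc numeral_2_eq_2)
    also have "\<dots> = [0..<N-2] @ [N-2, Suc (N-2)]" by simp
    also have "Suc (N - 2) = N - 1" using N2 by simp
    finally have "[0..<N] = [0..<N-2] @ [N-2, N-1]" .
    then have "map (\<lambda>i. of_int (g (i + j + 2)) :: rat) [0..<N] = concat bs @ [of_int (g j), of_int (g (Suc j))]"
      using bs(2) hN1 hN2 unfolding h_def by (simp add: comp_def)
    moreover have "[of_int (g j), of_int (g (Suc j))] \<in> {[1],[-1,2],[-2,3::rat]}"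
      using gj gs by auto
    ultimately show ?thesis using j(1) bs(1) by (intro exI[of _ j]) auto
  qed
qed

theorem lemma6p15:
  fixes E :: "'v::finite \<Rightarrow> 'v \<Rightarrow> nat"
    and l m n :: "'v \<Rightarrow> nat"
    and b :: "'v \<Rightarrow> rat"
    and x :: "nat \<Rightarrow> 'v"
    and a :: "nat \<Rightarrow> nat"
    and N :: nat
  defines "K \<equiv> (\<lambda>i. of_nat (l i) - b i + 1)"
  assumes E_invertible: "\<forall>c::'v \<Rightarrow> rat. (\<forall>i. (\<Sum>j\<in>UNIV. of_nat (E i j) * c j) = 0) \<longrightarrow> c = (\<lambda>_. 0)"
    and b_eq: "\<forall>i. (\<Sum>j\<in>UNIV. of_nat (E i j) * b j) = of_nat (l i + m i + n i + 2)"
    and K_int: "\<forall>i. K i \<in> \<int>"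
    and K_sum: "(\<Sum>i\<in>UNIV. K i) = 1"
    and four_insertions: "(\<Sum>i\<in>UNIV. l i) + 2 \<ge> 4"
    and N_ge: "N \<ge> 2"
    and x_inj: "inj_on x {..<N}"
    and a_ge: "\<forall>i<N. a i \<ge> 2"
    and loop_rows: "\<forall>i<N. \<forall>v. E (x i) v =
        (if v = x i then a i else if v = x (Suc i mod N) then 1 else 0)"
    and block_cols: "\<forall>v. v \<notin> x ` {..<N} \<longrightarrow> (\<forall>i<N. E v (x i) = 0)"
    and basis_W1: "\<forall>i<N. m (x i) \<le> a i - 1 \<and> n (x i) \<le> a i - 1"
    and K_W1: "(\<Sum>i<N. K (x i)) = 1"
  shows "\<exists>r<N. \<exists>bs fin.
           set bs \<subseteq> {[0], [-1, 1]} \<and> fin \<in> {[1], [-1, 2], [-2, 3]} \<and>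
           map (\<lambda>i. K (x ((i + r) mod N))) [0..<N] = concat bs @ fin \<and>
           (fin = [-2, 3] \<longrightarrow> a ((N - 2 + r) mod N) = 2) \<and>
           (fin \<noteq> [1] \<longrightarrow> l (x ((N - 2 + r) mod N)) + l (x ((N - 1 + r) mod N)) \<le> 1)"
  proof -
  define g where "g i = \<lfloor>K (x (i mod N))\<rfloor>" for i
  have Kint: "of_int (g i) = K (x (i mod N))" for i
  proof -
    obtain z where "K (x (i mod N)) = of_int z" using K_int by (meson Ints_cases)
    then show ?thesis unfolding g_def by simp
  qed
  have gmod: "g (i mod N) = g i" for i unfolding g_def by simp
  have per: "\<forall>i. g (i + N) = g i" unfolding g_def by simp
  have "(of_int (\<Sum>i<N. g i) :: rat) = (\<Sum>i<N. K (x i))"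
    by (simp add: Kint)
  then have gsum: "(\<Sum>i<N. g i) = 1" using K_W1 by (metis of_int_eq_1_iff)
  have key: "(g i < 0 \<longrightarrow> g (Suc i) \<ge> -2 * g i - 1)
      \<and> (g i = -2 \<and> g (Suc i) = 3 \<longrightarrow> a i = 2 \<and> l (x i) + l (x (Suc i mod N)) \<le> 1)
      \<and> (g i = -1 \<and> g (Suc i) = 2 \<longrightarrow> l (x i) + l (x (Suc i mod N)) \<le> 1)" if iN: "i < N" for i
  proof -
    define i' where "i' = Suc i mod N"
    have i'N: "i' < N" unfolding i'_def using iN by simp
    have "i \<noteq> i'"
    proof (cases "Suc i < N")
      case True then show ?thesis unfolding i'_def by simp
    next
      case False
      then have "Suc i = N" using iN by simp
      then show ?thesis unfolding i'_def using N_ge by auto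
    qed
    then have neq: "x i \<noteq> x i'" using x_inj iN i'N by (meson inj_on_contraD lessThan_iff)
    have pt: "of_nat (E (x i) v) * b v = (if v = x i then of_nat (a i) * b v else 0) + (if v = x i' then b v else 0)" for v
      using loop_rows iN neq unfolding i'_def by auto
    have "(\<Sum>v\<in>UNIV. of_nat (E (x i) v) * b v) = of_nat (a i) * b (x i) + b (x i')"
      by (simp add: pt sum.distrib)
    then have req: "of_nat (a i) * b (x i) + b (x i') = of_nat (l (x i) + m (x i) + n (x i) + 2)"
      using b_eq by simp
    have bv: "b v = of_nat (l v) + 1 - K v" for v unfolding K_def by simp
    have K1: "K (x i) = of_int (g i)" using Kint[of i] iN by simp
    have K2: "K (x i') = of_int (g (Suc i))" using Kint[of "Suc i"] unfolding i'_def by simp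
    have "(of_int (int (a i) * (int (l (x i)) + 1 - g i) + (int (l (x i')) + 1 - g (Suc i))) :: rat)
        = of_int (int (l (x i) + m (x i) + n (x i) + 2))"
      using req unfolding bv K1 K2 by simp
    then have ieq: "int (a i) * (int (l (x i)) + 1 - g i) + (int (l (x i')) + 1 - g (Suc i))
        = int (l (x i)) + int (m (x i)) + int (n (x i)) + 2"
      by (simp only: of_int_eq_iff)
    have A2: "int (a i) \<ge> 2" using a_ge iN by simp
    have mA: "int (m (x i)) \<le> int (a i) - 1" using basis_W1 iN a_ge by fastforce
    have nA: "int (n (x i)) \<le> int (a i) - 1" using basis_W1 iN a_ge by fastforce
    have "(g i < 0 \<longrightarrow> g (Suc i) \<ge> -2 * g i - 1) \<and> (g i = -2 \<and> g (Suc i) = 3 \<longrightarrow> int (a i) = 2 \<and> int (l (x i)) + int (l (x i')) \<le> 1)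
     \<and> (g i = -1 \<and> g (Suc i) = 2 \<longrightarrow> int (l (x i)) + int (l (x i')) \<le> 1)"
      by (rule arith1[OF ieq A2 _ _ _ _ mA nA]) auto
    then show ?thesis unfolding i'_def by linarith
  qed
  have ineq: "\<forall>i. g i < 0 \<longrightarrow> g (Suc i) \<ge> -2 * g i - 1"
  proof (intro allI impI)
    fix i assume neg: "g i < 0"
    have "g (Suc i) = g (Suc (i mod N))" using gmod[of "Suc i"] gmod[of "Suc (i mod N)"] by (simp add: mod_Suc_eq)
    moreover have "g i = g (i mod N)" using gmod by simp
    moreover have "i mod N < N" using N_ge by simp
    ultimately show "g (Suc i) \<ge> -2 * g i - 1" using key[of "i mod N"] neg by simp
  qed
  obtain j bs fin where j: "j < N" and bs: "set bs \<subseteq> {[0::rat],[-1,1]}" and fin: "fin \<in> {[1],[-1,2],[-2,3]}"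
    and mp: "map (\<lambda>i. of_int (g (i + j + 2))) [0..<N] = concat bs @ fin"
    and fj: "fin \<noteq> [1] \<longrightarrow> fin = [of_int (g j), of_int (g (Suc j))]"
    using comb[OF N_ge per ineq gsum] by blast
  define r where "r = (j + 2) mod N"
  have rN: "r < N" unfolding r_def using N_ge by simp
  have m1: "map (\<lambda>i. K (x ((i + r) mod N))) [0..<N] = map (\<lambda>i. of_int (g (i + j + 2))) [0..<N]"
  proof (rule map_cong[OF refl])
    fix i
    have "(i + r) mod N = (i + j + 2) mod N" unfolding r_def by (simp add: mod_add_right_eq add.assoc)
    then show "K (x ((i + r) mod N)) = of_int (g (i + j + 2))" using Kint by simp
  qed
  have ix2: "(N - 2 + r) mod N = j"
  proof -
    have "(N - 2 + r) mod N = (N - 2 + (j + 2)) mod N" unfolding r_def by (simp add: mod_add_right_eq)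
    also have "N - 2 + (j + 2) = j + N" using N_ge by simp
    finally show ?thesis using j by simp
  qed
  have ix1: "(N - 1 + r) mod N = Suc j mod N"
  proof -
    have "(N - 1 + r) mod N = (N - 1 + (j + 2)) mod N" unfolding r_def by (simp add: mod_add_right_eq)
    also have "N - 1 + (j + 2) = Suc j + N" using N_ge by simp
    finally have "(N - 1 + r) mod N = (Suc j + N) mod N" . then show ?thesis by (simp only: mod_add_self2)
  qed
  have props: "(fin = [-2, 3] \<longrightarrow> a ((N - 2 + r) mod N) = 2) \<and>
           (fin \<noteq> [1] \<longrightarrow> l (x ((N - 2 + r) mod N)) + l (x ((N - 1 + r) mod N)) \<le> 1)"
  proof (cases "fin = [1]")
    case True then show ?thesis by simp
  next
    case False
    then have f2: "fin = [of_int (g j), of_int (g (Suc j))]" using fj by simp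
    have "(g j = -1 \<and> g (Suc j) = 2) \<or> (g j = -2 \<and> g (Suc j) = 3)"
    proof -
      have "fin = [-1,2] \<or> fin = [-2,3]" using fin False by simp
      then show ?thesis using f2 by auto
    qed
    then show ?thesis
    proof
      assume g1: "g j = -1 \<and> g (Suc j) = 2"
      then have "fin = [-1, 2]" using f2 by simp
      moreover have "l (x j) + l (x (Suc j mod N)) \<le> 1" using key[OF j] g1 by blast
      ultimately show ?thesis unfolding ix1 ix2 by simp
    next
      assume g2: "g j = -2 \<and> g (Suc j) = 3"
      then have "a j = 2 \<and> l (x j) + l (x (Suc j mod N)) \<le> 1" using key[OF j] by blast
      then show ?thesis unfolding ix1 ix2 by simp
    qed
  qed
  have mpK: "map (\<lambda>i. K (x ((i + r) mod N))) [0..<N] = concat bs @ fin" by (rule trans[OF m1 mp])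
  from props have p1: "fin = [-2, 3] \<longrightarrow> a ((N - 2 + r) mod N) = 2"
    and p2: "fin \<noteq> [1] \<longrightarrow> l (x ((N - 2 + r) mod N)) + l (x ((N - 1 + r) mod N)) \<le> 1" by blast+
  show ?thesis
    apply (rule exI[of _ r], rule conjI[OF rN])
    apply (rule exI[of _ bs], rule exI[of _ fin])
    apply (intro conjI)
        apply (fact bs)
       apply (fact fin)
      apply (fact mpK)
     apply (fact p1)
    apply (fact p2)
    done
qed

end
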